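(* Consider the second-order Kuramoto model with bonding force $$\dot\theta_i=\omega_i,\qquad \dot\omega_i=\frac{1}{N}\sum_{j=1}^N\big[\kappa_0\cos(\theta_j-\theta_i)+\kappa_1\big](\omega_j-\omega_i)+\frac{\kappa_2}{N}\sum_{j=1}^N\big[|\theta_j-\theta_i|-\theta^\infty_{ij}\big]\operatorname{sgn}(\theta_j-\theta_i),\quad i\in[N].$$ Suppose $(\Theta^0,W^0)\in\mathcal{S}$, $\mathcal{E}(0)<\frac{\kappa_2(\min_{i\ne j}\theta^\infty_{ij})^2}{2N}$, $\kappa_0\cos\mathcal{U}+\kappa_1>0$, $\kappa_2>0$, and let $\{\theta_i\}$ be a global smooth solution. Then for $i\ne j$, $$\sup_{t\ge0}\Big|\frac{d}{dt}|\omega_j(t)-\omega_i(t)|^2\Big|<\infty,$$ and consequently the map $t\mapsto\sum_{i,j=1}^N|\omega_j(t)-\omega_i(t)|^2$ is uniformly continuous on $[0,\infty)$.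
   Context: $N\ge2$, $\kappa_0,\kappa_1\ge0$; $[\theta^\infty_{ij}]$ real symmetric with zero diagonal; $\operatorname{sgn}$ the sign function. $\mathcal{E}:=\frac12\sum_i|\omega_i|^2+\frac{\kappa_2}{4N}\sum_{i,j}(|\theta_j-\theta_i|-\theta^\infty_{ij})^2$; $\mathcal{U}:=\max_{i\ne j}\theta^\infty_{ij}+\sqrt{2N\mathcal{E}(0)/\kappa_2}$; $\mathcal{S}:=\{(\Theta,W)\in\mathbb{R}^{2N}:|\theta_i-\theta_j|<\mathcal{U}<\pi\ \forall i,j\}$. *)

theory Defs
  imports "HOL-Analysis.Analysis"
begin

text \<open>Oscillators are indexed by 0..N-1. A state is a pair of maps nat => real
 (phases Theta and frequencies W); only indices below N matter.\<close>

definition kur_energy ::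
  "nat \<Rightarrow> real \<Rightarrow> (nat \<Rightarrow> nat \<Rightarrow> real) \<Rightarrow> (nat \<Rightarrow> real) \<Rightarrow> (nat \<Rightarrow> real) \<Rightarrow> real" where
  "kur_energy N \<kappa>2 thinf \<Theta> W =
     (1/2) * (\<Sum>i<N. (W i)\<^sup>2)
     + \<kappa>2 / (4 * real N) * (\<Sum>i<N. \<Sum>j<N. (\<bar>\<Theta> j - \<Theta> i\<bar> - thinf i j)\<^sup>2)"

definition max_thinf :: "nat \<Rightarrow> (nat \<Rightarrow> nat \<Rightarrow> real) \<Rightarrow> real" where
  "max_thinf N thinf = Max {thinf i j | i j. i < N \<and> j < N \<and> i \<noteq> j}"

definition min_thinf :: "nat \<Rightarrow> (nat \<Rightarrow> nat \<Rightarrow> real) \<Rightarrow> real" where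
  "min_thinf N thinf = Min {thinf i j | i j. i < N \<and> j < N \<and> i \<noteq> j}"

definition kur_U :: "nat \<Rightarrow> real \<Rightarrow> (nat \<Rightarrow> nat \<Rightarrow> real) \<Rightarrow> real \<Rightarrow> real" where
  "kur_U N \<kappa>2 thinf E0 = max_thinf N thinf + sqrt (2 * real N * E0 / \<kappa>2)"

definition in_S :: "nat \<Rightarrow> real \<Rightarrow> (nat \<Rightarrow> real) \<Rightarrow> bool" where
  "in_S N U \<Theta> \<longleftrightarrow> (\<forall>i<N. \<forall>j<N. \<bar>\<Theta> i - \<Theta> j\<bar> < U) \<and> U < pi"

definition kur_rhs ::
  "nat \<Rightarrow> real \<Rightarrow> real \<Rightarrow> real \<Rightarrow> (nat \<Rightarrow> nat \<Rightarrow> real) \<Rightarrow> (nat \<Rightarrow> real) \<Rightarrow> (nat \<Rightarrow> real) \<Rightarrow> nat \<Rightarrow> real" where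
  "kur_rhs N \<kappa>0 \<kappa>1 \<kappa>2 thinf \<Theta> W i =
     (1 / real N) * (\<Sum>j<N. (\<kappa>0 * cos (\<Theta> j - \<Theta> i) + \<kappa>1) * (W j - W i))
     + (\<kappa>2 / real N) * (\<Sum>j<N. (\<bar>\<Theta> j - \<Theta> i\<bar> - thinf i j) * sgn (\<Theta> j - \<Theta> i))"

definition kur_solution ::
  "nat \<Rightarrow> real \<Rightarrow> real \<Rightarrow> real \<Rightarrow> (nat \<Rightarrow> nat \<Rightarrow> real) \<Rightarrow> (real \<Rightarrow> nat \<Rightarrow> real) \<Rightarrow> (real \<Rightarrow> nat \<Rightarrow> real) \<Rightarrow> bool" where
  "kur_solution N \<kappa>0 \<kappa>1 \<kappa>2 thinf \<theta> \<omega> \<longleftrightarrow>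
     (\<forall>t\<ge>0. \<forall>i<N.
        ((\<lambda>s. \<theta> s i) has_real_derivative \<omega> t i) (at t within {0..}) \<and>
        ((\<lambda>s. \<omega> s i) has_real_derivative kur_rhs N \<kappa>0 \<kappa>1 \<kappa>2 thinf (\<theta> t) (\<omega> t) i) (at t within {0..}))"

end

theory Submission
  imports Defs
begin

lemma DERIV_abs_nz: "(x::real) \<noteq> 0 \<Longrightarrow> DERIV abs x :> sgn x"
proof -
  assume x: "x \<noteq> 0"
  have ev: "eventually (\<lambda>y. abs y = sgn x * y) (nhds x)"
  proof (cases "x > 0")
    case True
    then have "eventually (\<lambda>y. y > 0) (nhds x)"
      using order_tendstoD(1)[OF filterlim_ident True] by simp
    then show ?thesis by eventually_elim (use True in auto)
  next
    case False
    then have "x < 0" using x by auto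
    then have "eventually (\<lambda>y. y < 0) (nhds x)"
      using order_tendstoD(2)[OF filterlim_ident \<open>x<0\<close>] by simp
    then show ?thesis by eventually_elim (use \<open>x<0\<close> in auto)
  qed
  have "DERIV (\<lambda>y. sgn x * y) x :> sgn x * 1"
    using DERIV_cmult[OF DERIV_ident] by simp
  then show ?thesis using DERIV_cong_ev[OF refl ev refl] by simp
qed

lemma DERIV_abs_comp:
  assumes "(g has_real_derivative g') (at t within S)" "g t \<noteq> (0::real)"
  shows "((\<lambda>s. \<bar>g s\<bar>) has_real_derivative sgn (g t) * g') (at t within S)"
  using DERIV_chain2[OF DERIV_abs_nz[OF assms(2)] assms(1)] .

lemma nb: "(t::real) \<ge> 0 \<Longrightarrow> at t within {0..} \<noteq> bot"
proof -
  assume "t \<ge> 0"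
  have "at_right t \<le> at t within {0..}"
    using \<open>t\<ge>0\<close> by (intro at_le) auto
  moreover have "at_right t \<noteq> (bot :: real filter)" by simp
  ultimately show ?thesis by (metis bot.extremum_uniqueI)
qed

lemma antisym_sum:
  fixes h :: "nat \<Rightarrow> nat \<Rightarrow> real"
  assumes "\<And>i j. i<N \<Longrightarrow> j<N \<Longrightarrow> h j i = - h i j"
  shows "(\<Sum>i<N. \<Sum>j<N. h i j * w i) = -(1/2) * (\<Sum>i<N. \<Sum>j<N. h i j * (w j - w i))"
proof -
  have "(\<Sum>i<N. \<Sum>j<N. h i j * w i) = (\<Sum>j<N. \<Sum>i<N. h i j * w i)"
    by (rule sum.swap)
  also have "\<dots> = (\<Sum>j<N. \<Sum>i<N. - (h j i * w i))"
  proof (intro sum.cong refl)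
    fix j i assume "j \<in> {..<N}" "i \<in> {..<N}"
    then show "h i j * w i = - (h j i * w i)" using assms[of j i] by simp
  qed
  finally have S: "(\<Sum>i<N. \<Sum>j<N. h i j * w i) = - (\<Sum>i<N. \<Sum>j<N. h i j * w j)"
    by (simp add: sum_negf)
  have "(\<Sum>i<N. \<Sum>j<N. h i j * (w j - w i)) = (\<Sum>i<N. \<Sum>j<N. h i j * w j) - (\<Sum>i<N. \<Sum>j<N. h i j * w i)"
    by (simp add: right_diff_distrib sum_subtractf)
  then show ?thesis using S by simp
qed

lemma energy_pair:
  fixes \<Theta> W :: "nat \<Rightarrow> real"
  assumes k2: "\<kappa>2 > 0" and ij: "i < N" "j < N" "i \<noteq> j"
    and sym: "thinf i j = thinf j i"
  shows "\<kappa>2 / (2 * real N) * (\<bar>\<Theta> j - \<Theta> i\<bar> - thinf i j)\<^sup>2 \<le> kur_energy N \<kappa>2 thinf \<Theta> W"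
proof -
  define f where "f i j = (\<bar>\<Theta> j - \<Theta> i\<bar> - thinf i j)\<^sup>2" for i j
  have fs: "f j i = f i j" unfolding f_def using sym by (simp add: abs_minus_commute)
  have "(\<Sum>k\<in>{i,j}. \<Sum>l<N. f k l) \<le> (\<Sum>k<N. \<Sum>l<N. f k l)"
    by (rule sum_mono2) (use ij in \<open>auto simp: f_def intro!: sum_nonneg\<close>)
  moreover have "(\<Sum>k\<in>{i,j}. \<Sum>l<N. f k l) = (\<Sum>l<N. f i l) + (\<Sum>l<N. f j l)"
    using ij by simp
  moreover have "f i j \<le> (\<Sum>l<N. f i l)"
    by (rule member_le_sum) (use ij in \<open>auto simp: f_def\<close>)
  moreover have "f j i \<le> (\<Sum>l<N. f j l)"
    by (rule member_le_sum) (use ij in \<open>auto simp: f_def\<close>)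
  ultimately have "2 * f i j \<le> (\<Sum>k<N. \<Sum>l<N. f k l)" using fs by linarith
  moreover have "0 \<le> (1/2) * (\<Sum>i<N. (W i)\<^sup>2)" by (auto intro!: sum_nonneg)
  moreover have "N > 0" using ij by auto
  ultimately have A: "\<kappa>2 / (4 * real N) * (2 * f i j) \<le> \<kappa>2 / (4 * real N) * (\<Sum>k<N. \<Sum>l<N. f k l)"
    using k2 by (intro mult_left_mono) auto
  have B: "\<kappa>2 / (4 * real N) * (\<Sum>k<N. \<Sum>l<N. f k l) \<le> kur_energy N \<kappa>2 thinf \<Theta> W"
    unfolding kur_energy_def f_def[symmetric] using \<open>0 \<le> (1/2) * (\<Sum>i<N. (W i)\<^sup>2)\<close> by linarith
  have C: "\<kappa>2 / (4 * real N) * (2 * f i j) = \<kappa>2 / (2 * real N) * f i j" by simp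
  show ?thesis using A B C unfolding f_def by linarith
qed

lemma energy_deriv:
  fixes \<theta> \<omega> :: "real \<Rightarrow> nat \<Rightarrow> real"
  assumes sol: "kur_solution N \<kappa>0 \<kappa>1 \<kappa>2 thinf \<theta> \<omega>" and t: "t \<ge> 0"
    and sym: "\<forall>i<N. \<forall>j<N. thinf i j = thinf j i"
    and nz: "\<forall>i<N. \<forall>j<N. i \<noteq> j \<longrightarrow> \<theta> t j \<noteq> \<theta> t i"
  shows "((\<lambda>s. kur_energy N \<kappa>2 thinf (\<theta> s) (\<omega> s)) has_real_derivative
     -(1/(2*real N)) * (\<Sum>i<N. \<Sum>j<N. (\<kappa>0 * cos (\<theta> t j - \<theta> t i) + \<kappa>1) * (\<omega> t j - \<omega> t i)\<^sup>2)) (at t within {0..})"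
proof -
  let ?F = "at t within {0..}"
  define r where "r i = kur_rhs N \<kappa>0 \<kappa>1 \<kappa>2 thinf (\<theta> t) (\<omega> t) i" for i
  define a where "a i j = \<kappa>0 * cos (\<theta> t j - \<theta> t i) + \<kappa>1" for i j
  define g where "g i j = (\<bar>\<theta> t j - \<theta> t i\<bar> - thinf i j) * sgn (\<theta> t j - \<theta> t i)" for i j
  define w where "w i = \<omega> t i" for i
  have d\<theta>: "\<And>i. i<N \<Longrightarrow> ((\<lambda>s. \<theta> s i) has_real_derivative \<omega> t i) ?F"
    using sol t unfolding kur_solution_def by blast
  have d\<omega>: "\<And>i. i<N \<Longrightarrow> ((\<lambda>s. \<omega> s i) has_real_derivative r i) ?F"
    using sol t unfolding kur_solution_def r_def by blast
  have d1: "((\<lambda>s. \<Sum>i<N. (\<omega> s i)\<^sup>2) has_real_derivative (\<Sum>i<N. 2 * (w i * r i))) ?F"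
  proof (rule DERIV_sum)
    fix i assume "i \<in> {..<N}"
    then show "((\<lambda>s. (\<omega> s i)\<^sup>2) has_real_derivative 2 * (w i * r i)) ?F"
      using DERIV_power[OF d\<omega>[of i], of 2] by (simp add: w_def mult_ac)
  qed
  have d2: "((\<lambda>s. \<Sum>i<N. \<Sum>j<N. (\<bar>\<theta> s j - \<theta> s i\<bar> - thinf i j)\<^sup>2) has_real_derivative
      (\<Sum>i<N. \<Sum>j<N. 2 * (g i j * (w j - w i)))) ?F"
  proof (rule DERIV_sum, rule DERIV_sum)
    fix i j assume i: "i \<in> {..<N}" and j: "j \<in> {..<N}"
    show "((\<lambda>s. (\<bar>\<theta> s j - \<theta> s i\<bar> - thinf i j)\<^sup>2) has_real_derivative 2 * (g i j * (w j - w i))) ?F"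
    proof (cases "i = j")
      case True then show ?thesis by (simp add: g_def)
    next
      case False
      have dd: "((\<lambda>s. \<theta> s j - \<theta> s i) has_real_derivative \<omega> t j - \<omega> t i) ?F"
        using d\<theta> i j by (auto intro!: DERIV_diff)
      have da: "((\<lambda>s. \<bar>\<theta> s j - \<theta> s i\<bar>) has_real_derivative sgn (\<theta> t j - \<theta> t i) * (\<omega> t j - \<omega> t i)) ?F"
        using DERIV_abs_comp[OF dd] nz i j False by auto
      have "((\<lambda>s. \<bar>\<theta> s j - \<theta> s i\<bar> - thinf i j) has_real_derivative sgn (\<theta> t j - \<theta> t i) * (\<omega> t j - \<omega> t i) - 0) ?F"
        by (rule DERIV_diff[OF da DERIV_const])
      from DERIV_power[OF this, of 2] show ?thesis
        by (simp add: g_def w_def mult_ac)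
    qed
  qed
  have dE: "((\<lambda>s. kur_energy N \<kappa>2 thinf (\<theta> s) (\<omega> s)) has_real_derivative
     (1/2) * (\<Sum>i<N. 2 * (w i * r i)) + \<kappa>2 / (4 * real N) * (\<Sum>i<N. \<Sum>j<N. 2 * (g i j * (w j - w i)))) ?F"
    unfolding kur_energy_def by (intro DERIV_add DERIV_cmult d1 d2)
  have ri: "w i * r i = (1/real N) * (\<Sum>j<N. (a i j * (w j - w i)) * w i) + (\<kappa>2/real N) * (\<Sum>j<N. g i j * w i)" for i
  proof -
    have rr: "r i = (1/real N) * (\<Sum>j<N. a i j * (w j - w i)) + (\<kappa>2/real N) * (\<Sum>j<N. g i j)"
      unfolding r_def kur_rhs_def a_def g_def w_def by (rule refl)
    have "w i * r i = (1/real N) * ((\<Sum>j<N. a i j * (w j - w i)) * w i) + (\<kappa>2/real N) * ((\<Sum>j<N. g i j) * w i)"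
      unfolding rr by (simp only: distrib_left mult.commute mult.left_commute)
    then show ?thesis by (simp only: sum_distrib_right)
  qed
  have asym_a: "a j i * (w i - w j) = - (a i j * (w j - w i))" if "i<N" "j<N" for i j
  proof -
    have "cos (\<theta> t i - \<theta> t j) = cos (\<theta> t j - \<theta> t i)"
      by (metis cos_minus minus_diff_eq)
    then show ?thesis unfolding a_def by (simp add: algebra_simps)
  qed
  have asym_g: "g j i = - g i j" if "i<N" "j<N" for i j
  proof -
    have "sgn (\<theta> t i - \<theta> t j) = - sgn (\<theta> t j - \<theta> t i)"
      by (metis sgn_minus minus_diff_eq)
    moreover have "\<bar>\<theta> t i - \<theta> t j\<bar> = \<bar>\<theta> t j - \<theta> t i\<bar>" by (rule abs_minus_commute)
    ultimately show ?thesis unfolding g_def using sym that by simp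
  qed
  have e2: "(\<Sum>i<N. \<Sum>j<N. (a i j * (w j - w i)) * w i) = -(1/2) * (\<Sum>i<N. \<Sum>j<N. (a i j * (w j - w i)) * (w j - w i))"
    using antisym_sum[of N "\<lambda>i j. a i j * (w j - w i)" w] asym_a by blast
  have e3: "(\<Sum>i<N. \<Sum>j<N. g i j * w i) = -(1/2) * (\<Sum>i<N. \<Sum>j<N. g i j * (w j - w i))"
    using antisym_sum[of N g w] asym_g by blast
  define Q where "Q = (\<Sum>i<N. \<Sum>j<N. (a i j * (w j - w i)) * (w j - w i))"
  define G where "G = (\<Sum>i<N. \<Sum>j<N. g i j * (w j - w i))"
  have S1a: "(\<Sum>i<N. 2 * (w i * r i)) = 2 * (\<Sum>i<N. w i * r i)"
    by (simp only: sum_distrib_left)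
  have S1b: "(\<Sum>i<N. w i * r i) = (1/real N) * (\<Sum>i<N. \<Sum>j<N. (a i j * (w j - w i)) * w i) + (\<kappa>2/real N) * (\<Sum>i<N. \<Sum>j<N. g i j * w i)"
    by (simp only: ri sum.distrib sum_distrib_left[symmetric])
  have S1: "(\<Sum>i<N. 2 * (w i * r i)) = 2 * ((1/real N) * (-(1/2) * Q) + (\<kappa>2/real N) * (-(1/2) * G))"
    unfolding S1a S1b e2 e3 Q_def G_def by (rule refl)
  have S2: "(\<Sum>i<N. \<Sum>j<N. 2 * (g i j * (w j - w i))) = 2 * G"
    unfolding G_def by (simp add: sum_distrib_left)
  have Qe: "Q = (\<Sum>i<N. \<Sum>j<N. (\<kappa>0 * cos (\<theta> t j - \<theta> t i) + \<kappa>1) * (\<omega> t j - \<omega> t i)\<^sup>2)"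
    unfolding Q_def a_def w_def by (simp add: power2_eq_square mult_ac)
  have X: "(1/2) * (\<Sum>i<N. 2 * (w i * r i)) + \<kappa>2 / (4 * real N) * (\<Sum>i<N. \<Sum>j<N. 2 * (g i j * (w j - w i)))
     = -(1/(2*real N)) * Q"
    unfolding S1 S2 by (cases "N = 0") (simp_all add: field_simps)
  from dE show ?thesis unfolding X Qe .
qed


lemma sum_abs_bound:
  fixes f :: "nat \<Rightarrow> real"
  assumes "\<And>j. j<N \<Longrightarrow> \<bar>f j\<bar> \<le> C"
  shows "\<bar>\<Sum>j<N. f j\<bar> \<le> real N * C"
proof -
  have "\<bar>\<Sum>j<N. f j\<bar> \<le> (\<Sum>j<N. \<bar>f j\<bar>)" by (rule sum_abs)
  also have "\<dots> \<le> (\<Sum>j<N. C)" by (rule sum_mono) (use assms in auto)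
  finally show ?thesis by simp
qed

lemma scaled_sum_bound:
  fixes f :: "nat \<Rightarrow> real"
  assumes "\<And>j. j<N \<Longrightarrow> \<bar>f j\<bar> \<le> C" and "c \<ge> 0" and "N > 0"
  shows "\<bar>c / real N * (\<Sum>j<N. f j)\<bar> \<le> c * C"
proof -
  have "\<bar>c / real N * (\<Sum>j<N. f j)\<bar> = c / real N * \<bar>\<Sum>j<N. f j\<bar>"
    using assms by (simp add: abs_mult)
  also have "\<dots> \<le> c / real N * (real N * C)"
    using sum_abs_bound[OF assms(1)] assms by (intro mult_left_mono) auto
  also have "\<dots> = c * C" using assms by simp
  finally show ?thesis .
qed

theorem lemma3p3:
  fixes N :: nat and \<kappa>0 \<kappa>1 \<kappa>2 :: real
    and thinf :: "nat \<Rightarrow> nat \<Rightarrow> real"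
    and \<theta> \<omega> :: "real \<Rightarrow> nat \<Rightarrow> real"
  assumes N2: "N \<ge> 2"
    and k0: "\<kappa>0 \<ge> 0" and k1: "\<kappa>1 \<ge> 0" and k2: "\<kappa>2 > 0"
    and sym: "\<forall>i<N. \<forall>j<N. thinf i j = thinf j i"
    and diag: "\<forall>i<N. thinf i i = 0"
    and sol: "kur_solution N \<kappa>0 \<kappa>1 \<kappa>2 thinf \<theta> \<omega>"
    and S0: "in_S N (kur_U N \<kappa>2 thinf (kur_energy N \<kappa>2 thinf (\<theta> 0) (\<omega> 0))) (\<theta> 0)"
    and E0: "kur_energy N \<kappa>2 thinf (\<theta> 0) (\<omega> 0) < \<kappa>2 * (min_thinf N thinf)\<^sup>2 / (2 * real N)"
    and pos: "\<kappa>0 * cos (kur_U N \<kappa>2 thinf (kur_energy N \<kappa>2 thinf (\<theta> 0) (\<omega> 0))) + \<kappa>1 > 0"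
  shows "(\<forall>i<N. \<forall>j<N. i \<noteq> j \<longrightarrow>
            (\<exists>M. \<forall>t\<ge>0. \<forall>D.
               ((\<lambda>s. (\<omega> s j - \<omega> s i)\<^sup>2) has_real_derivative D) (at t within {0..}) \<longrightarrow> \<bar>D\<bar> \<le> M))
         \<and> uniformly_continuous_on {0..} (\<lambda>t. \<Sum>i<N. \<Sum>j<N. (\<omega> t j - \<omega> t i)\<^sup>2)"
proof -
  define E where "E t = kur_energy N \<kappa>2 thinf (\<theta> t) (\<omega> t)" for t
  define E0 where "E0 = E 0"
  define s where "s = sqrt (2 * real N * E0 / \<kappa>2)"
  define mn where "mn = min_thinf N thinf"
  define mx where "mx = max_thinf N thinf"
  define U where "U = mx + s"
  have UU: "kur_U N \<kappa>2 thinf (kur_energy N \<kappa>2 thinf (\<theta> 0) (\<omega> 0)) = U"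
    by (simp add: kur_U_def U_def mx_def s_def E0_def E_def)
  have Npos: "N > 0" "real N > 0" using N2 by auto
  define TS where "TS = {thinf i j | i j. i < N \<and> j < N \<and> i \<noteq> j}"
  have TSsub: "TS \<subseteq> (\<lambda>p. thinf (fst p) (snd p)) ` ({..<N} \<times> {..<N})"
    unfolding TS_def by force
  have finTS: "finite TS" by (rule finite_subset[OF TSsub]) auto
  have "(0::nat) < N" "(1::nat) < N" "(0::nat) \<noteq> 1" using N2 by auto
  then have "thinf 0 1 \<in> TS" unfolding TS_def by blast
  then have neTS: "TS \<noteq> {}" by blast
  have mn_le: "mn \<le> thinf i j" if "i<N" "j<N" "i\<noteq>j" for i j
    unfolding mn_def min_thinf_def TS_def[symmetric]
    by (rule Min_le[OF finTS]) (use that in \<open>auto simp: TS_def\<close>)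
  have mx_ge: "thinf i j \<le> mx" if "i<N" "j<N" "i\<noteq>j" for i j
    unfolding mx_def max_thinf_def TS_def[symmetric]
    by (rule Max_ge[OF finTS]) (use that in \<open>auto simp: TS_def\<close>)
  have "mn \<in> TS" unfolding mn_def min_thinf_def TS_def[symmetric] by (rule Min_in[OF finTS neTS])
  then obtain i0 j0 where ij0: "i0 < N" "j0 < N" "i0 \<noteq> j0" "thinf i0 j0 = mn"
    unfolding TS_def by blast
  have Enn: "E t \<ge> 0" for t
    unfolding E_def kur_energy_def using k2 by (intro add_nonneg_nonneg mult_nonneg_nonneg sum_nonneg) auto
  have pairE: "\<kappa>2 / (2 * real N) * (\<bar>\<theta> t j - \<theta> t i\<bar> - thinf i j)\<^sup>2 \<le> E t"
    if "i<N" "j<N" "i\<noteq>j" for t i j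
    unfolding E_def by (rule energy_pair) (use that k2 sym in auto)
  have E0nn: "E0 \<ge> 0" unfolding E0_def by (rule Enn)
  have s2: "s\<^sup>2 = 2 * real N * E0 / \<kappa>2" unfolding s_def using E0nn k2 by simp
  have snn: "s \<ge> 0" unfolding s_def using E0nn k2 by simp
  have sqb: "(\<bar>\<theta> t j - \<theta> t i\<bar> - thinf i j)\<^sup>2 \<le> 2 * real N * E t / \<kappa>2"
    if "i<N" "j<N" "i\<noteq>j" for t i j
  proof -
    have "(\<bar>\<theta> t j - \<theta> t i\<bar> - thinf i j)\<^sup>2 = (2 * real N / \<kappa>2) * (\<kappa>2 / (2 * real N) * (\<bar>\<theta> t j - \<theta> t i\<bar> - thinf i j)\<^sup>2)"
      using k2 Npos by simp
    also have "\<dots> \<le> (2 * real N / \<kappa>2) * E t"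
      using pairE[OF that] k2 by (intro mult_left_mono) auto
    finally show ?thesis by simp
  qed
  have key: "\<bar>\<bar>\<theta> t j - \<theta> t i\<bar> - thinf i j\<bar> \<le> s"
    if "E t \<le> E0" "i<N" "j<N" "i\<noteq>j" for t i j
  proof -
    have "(\<bar>\<theta> t j - \<theta> t i\<bar> - thinf i j)\<^sup>2 \<le> 2 * real N * E0 / \<kappa>2"
      using sqb[OF that(2-4), of t] that(1) k2 Npos
      by (smt (verit, best) divide_right_mono mult_left_mono of_nat_0_le_iff)
    then have "(\<bar>\<theta> t j - \<theta> t i\<bar> - thinf i j)\<^sup>2 \<le> s\<^sup>2" using s2 by simp
    then show ?thesis using snn by (metis abs_le_square_iff abs_of_nonneg)
  qed
  have E0': "E0 < \<kappa>2 * mn\<^sup>2 / (2 * real N)" using E0 unfolding E0_def E_def mn_def .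
  have mnpos: "mn > 0"
  proof (rule ccontr)
    assume "\<not> mn > 0"
    then have "\<bar>mn\<bar> \<le> \<bar>\<bar>\<theta> 0 j0 - \<theta> 0 i0\<bar> - thinf i0 j0\<bar>"
      using ij0(4) by auto
    then have "mn\<^sup>2 \<le> (\<bar>\<theta> 0 j0 - \<theta> 0 i0\<bar> - thinf i0 j0)\<^sup>2"
      by (simp only: abs_le_square_iff)
    then have "\<kappa>2 / (2 * real N) * mn\<^sup>2 \<le> E0"
      using pairE[OF ij0(1-3), of 0] k2 Npos unfolding E0_def
      by (smt (verit, best) divide_nonneg_pos mult_left_mono of_nat_0_le_iff)
    moreover have "\<kappa>2 / (2 * real N) * mn\<^sup>2 = \<kappa>2 * mn\<^sup>2 / (2 * real N)" by simp
    ultimately show False using E0' by linarith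
  qed
  have "s\<^sup>2 < mn\<^sup>2"
  proof -
    have "2 * real N * E0 / \<kappa>2 < 2 * real N * (\<kappa>2 * mn\<^sup>2 / (2 * real N)) / \<kappa>2"
      using E0' k2 Npos by (intro divide_strict_right_mono mult_strict_left_mono) auto
    then show ?thesis using s2 k2 Npos by simp
  qed
  then have s_lt: "s < mn" using mnpos by (meson power_less_imp_less_base less_imp_le)
  define \<rho> where "\<rho> = (mn - s) / 2"
  have rho_pos: "\<rho> > 0" unfolding \<rho>_def using s_lt by simp
  have lowb: "2 * \<rho> \<le> \<bar>\<theta> t j - \<theta> t i\<bar>" if "E t \<le> E0" "i<N" "j<N" "i\<noteq>j" for t i j
    using key[OF that] mn_le[OF that(2-4)] unfolding \<rho>_def by (auto simp: abs_le_iff)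
  have upb: "\<bar>\<theta> t j - \<theta> t i\<bar> \<le> U" if "E t \<le> E0" "i<N" "j<N" "i\<noteq>j" for t i j
    using key[OF that] mx_ge[OF that(2-4)] unfolding U_def by (auto simp: abs_le_iff)
  have Upi: "U < pi" using S0 unfolding UU in_S_def by blast
  have posU: "\<kappa>0 * cos U + \<kappa>1 > 0" using pos unfolding UU .
  obtain U' where U': "U < U'" "U' < pi" "\<kappa>0 * cos U' + \<kappa>1 > 0"
  proof -
    have "((\<lambda>y. \<kappa>0 * cos y + \<kappa>1) \<longlongrightarrow> \<kappa>0 * cos U + \<kappa>1) (at_right U)"
      by (intro tendsto_intros)
    then have ev1: "\<forall>\<^sub>F y in at_right U. \<kappa>0 * cos y + \<kappa>1 > 0"
      using order_tendstoD(1) posU by blast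
    have ev2: "\<forall>\<^sub>F y in at_right U. y \<in> {U<..<pi}" by (rule eventually_at_right_real[OF Upi])
    have evc: "\<forall>\<^sub>F y in at_right U. \<kappa>0 * cos y + \<kappa>1 > 0 \<and> y \<in> {U<..<pi}"
      using ev1 ev2 by (rule eventually_conj)
    have "\<exists>y. \<kappa>0 * cos y + \<kappa>1 > 0 \<and> y \<in> {U<..<pi}"
      by (rule eventually_happens'[OF _ evc]) simp
    then obtain y where "\<kappa>0 * cos y + \<kappa>1 > 0 \<and> y \<in> {U<..<pi}" by blast
    then show ?thesis using that by auto
  qed
  define good where "good t \<longleftrightarrow> (\<forall>i<N. \<forall>j<N. i \<noteq> j \<longrightarrow> \<rho> < \<bar>\<theta> t j - \<theta> t i\<bar> \<and> \<bar>\<theta> t j - \<theta> t i\<bar> < U')" for t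
  have d\<theta>: "((\<lambda>s. \<theta> s i) has_real_derivative \<omega> t i) (at t within {0..})" if "t \<ge> 0" "i<N" for t i
    using sol that unfolding kur_solution_def by blast
  have d\<omega>: "((\<lambda>s. \<omega> s i) has_real_derivative kur_rhs N \<kappa>0 \<kappa>1 \<kappa>2 thinf (\<theta> t) (\<omega> t) i) (at t within {0..})"
    if "t \<ge> 0" "i<N" for t i
    using sol that unfolding kur_solution_def by blast
  have cont\<theta>: "continuous_on {0..} (\<lambda>s. \<theta> s i)" if "i<N" for i
    by (rule DERIV_continuous_on[OF d\<theta>]) (use that in auto)
  have cont\<omega>: "continuous_on {0..} (\<lambda>s. \<omega> s i)" if "i<N" for i
    by (rule DERIV_continuous_on[OF d\<omega>]) (use that in auto)
  have contE: "continuous_on {0..} E"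
    unfolding E_def kur_energy_def using Npos by (auto intro!: continuous_intros cont\<theta> cont\<omega>)
  have dissip: "\<exists>D\<le>0. (E has_real_derivative D) (at t within {0..})" if "t \<ge> 0" "good t" for t
  proof -
    have nz: "\<forall>i<N. \<forall>j<N. i \<noteq> j \<longrightarrow> \<theta> t j \<noteq> \<theta> t i"
      using that(2) rho_pos unfolding good_def by force
    have a_nn: "0 \<le> \<kappa>0 * cos (\<theta> t j - \<theta> t i) + \<kappa>1" if "i<N" "j<N" for i j
    proof (cases "i = j")
      case True then show ?thesis using k0 k1 by simp
    next
      case False
      have x: "\<bar>\<theta> t j - \<theta> t i\<bar> \<le> U'" using \<open>good t\<close> that False unfolding good_def by force
      have "cos U' \<le> cos \<bar>\<theta> t j - \<theta> t i\<bar>"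
        by (rule cos_monotone_0_pi_le) (use x U' in auto)
      then have "cos U' \<le> cos (\<theta> t j - \<theta> t i)" by simp
      then have "\<kappa>0 * cos U' \<le> \<kappa>0 * cos (\<theta> t j - \<theta> t i)" using k0 by (rule mult_left_mono)
      then show ?thesis using U'(3) by linarith
    qed
    have "0 \<le> (\<Sum>i<N. \<Sum>j<N. (\<kappa>0 * cos (\<theta> t j - \<theta> t i) + \<kappa>1) * (\<omega> t j - \<omega> t i)\<^sup>2)"
      using a_nn by (auto intro!: sum_nonneg mult_nonneg_nonneg)
    then have "-(1/(2*real N)) * (\<Sum>i<N. \<Sum>j<N. (\<kappa>0 * cos (\<theta> t j - \<theta> t i) + \<kappa>1) * (\<omega> t j - \<omega> t i)\<^sup>2) \<le> 0"
      using Npos by (simp add: mult_nonneg_nonneg)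
    moreover have "(E has_real_derivative -(1/(2*real N)) * (\<Sum>i<N. \<Sum>j<N. (\<kappa>0 * cos (\<theta> t j - \<theta> t i) + \<kappa>1) * (\<omega> t j - \<omega> t i)\<^sup>2)) (at t within {0..})"
      unfolding E_def[abs_def] by (rule energy_deriv[OF sol that(1) sym nz])
    ultimately show ?thesis by blast
  qed
  have mono: "E t \<le> E0" if t0: "t \<ge> 0" and gd: "\<forall>u. 0 \<le> u \<and> u < t \<longrightarrow> good u" for t
  proof (cases "t = 0")
    case True then show ?thesis unfolding E0_def by simp
  next
    case False
    then have tpos: "0 < t" using that by simp
    have "\<exists>l z. 0 < z \<and> z < t \<and> DERIV E z :> l \<and> E t - E 0 = (t - 0) * l"
    proof (rule MVT[OF tpos])
      show "continuous_on {0..t} E" by (rule continuous_on_subset[OF contE]) auto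
    next
      fix x assume x: "0 < x" "x < t"
      then obtain D where "(E has_real_derivative D) (at x within {0..})"
        using dissip[of x] gd by auto
      moreover have "at x within {0..} = at x" using x by (intro at_within_interior) simp
      ultimately show "E differentiable (at x)" using real_differentiable_def by auto
    qed
    then obtain l z where lz: "0 < z" "z < t" "DERIV E z :> l" "E t - E 0 = (t - 0) * l" by blast
    obtain D where D: "D \<le> 0" "(E has_real_derivative D) (at z within {0..})"
      using dissip[of z] gd lz by auto
    have "at z within {0..} = at z" using lz by (intro at_within_interior) simp
    with D lz have "l = D" using DERIV_unique by metis
    then have "(t - 0) * l \<le> 0" using D tpos by (simp add: mult_nonneg_nonpos)
    then show ?thesis using lz unfolding E0_def by simp
  qed
  have allgood: "\<forall>t\<ge>0. good t"
  proof (rule ccontr)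
    define B where "B = {t. t \<ge> 0 \<and> \<not> good t}"
    assume "\<not> (\<forall>t\<ge>0. good t)"
    then have Bne: "B \<noteq> {}" unfolding B_def by auto
    define PP where "PP = ({..<N} \<times> {..<N}) \<inter> {p. fst p \<noteq> snd p}"
    have Beq: "B = (\<Union>p\<in>PP. {0..} \<inter> (\<lambda>t. \<bar>\<theta> t (snd p) - \<theta> t (fst p)\<bar>) -` ({..\<rho>} \<union> {U'..}))"
      unfolding B_def PP_def good_def by (auto simp: not_less; blast)
    have "closed B" unfolding Beq
    proof (intro closed_UN ballI)
      show "finite PP" unfolding PP_def by auto
    next
      fix p assume p: "p \<in> PP"
      show "closed ({0..} \<inter> (\<lambda>t. \<bar>\<theta> t (snd p) - \<theta> t (fst p)\<bar>) -` ({..\<rho>} \<union> {U'..}))"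
        by (intro continuous_closed_preimage continuous_intros cont\<theta> closed_Un closed_atMost closed_atLeast)
           (use p in \<open>auto simp: PP_def\<close>)
    qed
    moreover have "bdd_below B" unfolding B_def by (rule bdd_belowI[of _ 0]) auto
    ultimately have TB: "Inf B \<in> B" using Bne closed_contains_Inf by blast
    define T where "T = Inf B"
    have T0: "T \<ge> 0" using TB unfolding T_def B_def by auto
    have "\<forall>u. 0 \<le> u \<and> u < T \<longrightarrow> good u"
    proof (intro allI impI)
      fix u assume u: "0 \<le> u \<and> u < T"
      show "good u"
      proof (rule ccontr)
        assume "\<not> good u"
        then have "u \<in> B" using u unfolding B_def by auto
        then have "T \<le> u" unfolding T_def using \<open>bdd_below B\<close> by (rule cInf_lower)
        with u show False by simp
      qed
    qed
    then have ET: "E T \<le> E0" by (rule mono[OF T0])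
    have "good T" unfolding good_def
    proof (intro allI impI)
      fix i j assume "i<N" "j<N" "i\<noteq>j"
      from lowb[OF ET this] upb[OF ET this] rho_pos U'(1)
      show "\<rho> < \<bar>\<theta> T j - \<theta> T i\<bar> \<and> \<bar>\<theta> T j - \<theta> T i\<bar> < U'" by linarith
    qed
    with TB show False unfolding T_def B_def by auto
  qed
  have Ebd: "E t \<le> E0" if "t \<ge> 0" for t
    using mono[OF that] allgood by auto
  define Wb where "Wb = sqrt (2 * E0)"
  have wb: "\<bar>\<omega> t i\<bar> \<le> Wb" if "t \<ge> 0" "i<N" for t i
  proof -
    have "(\<omega> t i)\<^sup>2 \<le> (\<Sum>k<N. (\<omega> t k)\<^sup>2)"
      by (rule member_le_sum[of i "{..<N}" "\<lambda>k. (\<omega> t k)\<^sup>2"]) (use that in auto)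
    also have "\<dots> \<le> 2 * E t"
    proof -
      have "0 \<le> \<kappa>2 / (4 * real N) * (\<Sum>i<N. \<Sum>j<N. (\<bar>\<theta> t j - \<theta> t i\<bar> - thinf i j)\<^sup>2)"
        using k2 by (intro mult_nonneg_nonneg sum_nonneg) auto
      moreover have "\<And>A B::real. 0 \<le> B \<Longrightarrow> A \<le> 2 * (1/2 * A + B)" by (simp add: algebra_simps)
      ultimately show ?thesis unfolding E_def kur_energy_def by blast
    qed
    also have "\<dots> \<le> 2 * E0" using Ebd[OF that(1)] by simp
    finally have "sqrt ((\<omega> t i)\<^sup>2) \<le> Wb" unfolding Wb_def by (rule real_sqrt_le_mono)
    then show ?thesis by simp
  qed
  have Wbnn: "Wb \<ge> 0" unfolding Wb_def using E0nn by simp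
  have gb: "\<bar>(\<bar>\<theta> t j - \<theta> t i\<bar> - thinf i j) * sgn (\<theta> t j - \<theta> t i)\<bar> \<le> s"
    if "t \<ge> 0" "i<N" "j<N" for t i j
  proof (cases "i = j")
    case True then show ?thesis using snn by simp
  next
    case False
    have "\<bar>(\<bar>\<theta> t j - \<theta> t i\<bar> - thinf i j) * sgn (\<theta> t j - \<theta> t i)\<bar> \<le> \<bar>\<bar>\<theta> t j - \<theta> t i\<bar> - thinf i j\<bar>"
      by (simp add: abs_mult abs_sgn_eq)
    also have "\<dots> \<le> s" using key[OF Ebd[OF that(1)] that(2,3) False] .
    finally show ?thesis .
  qed
  define R where "R = (\<kappa>0 + \<kappa>1) * (2 * Wb) + \<kappa>2 * s"
  have rb: "\<bar>kur_rhs N \<kappa>0 \<kappa>1 \<kappa>2 thinf (\<theta> t) (\<omega> t) i\<bar> \<le> R" if "t \<ge> 0" "i<N" for t i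
  proof -
    have A: "\<bar>1 / real N * (\<Sum>j<N. (\<kappa>0 * cos (\<theta> t j - \<theta> t i) + \<kappa>1) * (\<omega> t j - \<omega> t i))\<bar> \<le> 1 * ((\<kappa>0 + \<kappa>1) * (2 * Wb))"
    proof (rule scaled_sum_bound)
      fix j assume j: "j < N"
      have c: "\<bar>\<kappa>0 * cos (\<theta> t j - \<theta> t i) + \<kappa>1\<bar> \<le> \<kappa>0 + \<kappa>1"
      proof -
        have "\<bar>cos (\<theta> t j - \<theta> t i)\<bar> \<le> 1" by simp
        then have "\<bar>\<kappa>0 * cos (\<theta> t j - \<theta> t i)\<bar> \<le> \<kappa>0" using k0 by (simp add: abs_mult mult_left_le)
        then show ?thesis using k1 by linarith
      qed
      have w: "\<bar>\<omega> t j - \<omega> t i\<bar> \<le> 2 * Wb" using wb[OF that(1) j] wb[OF that] by linarith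
      show "\<bar>(\<kappa>0 * cos (\<theta> t j - \<theta> t i) + \<kappa>1) * (\<omega> t j - \<omega> t i)\<bar> \<le> (\<kappa>0 + \<kappa>1) * (2 * Wb)"
        unfolding abs_mult by (rule mult_mono[OF c w]) (use k0 k1 in auto)
    qed (use Npos in auto)
    have B: "\<bar>\<kappa>2 / real N * (\<Sum>j<N. (\<bar>\<theta> t j - \<theta> t i\<bar> - thinf i j) * sgn (\<theta> t j - \<theta> t i))\<bar> \<le> \<kappa>2 * s"
      by (rule scaled_sum_bound) (use gb[OF that(1) that(2)] k2 Npos in auto)
    show ?thesis unfolding kur_rhs_def R_def using A B by linarith
  qed
  have Rnn: "R \<ge> 0" unfolding R_def using k0 k1 k2 Wbnn snn by simp
  define M where "M = 2 * ((2 * R) * (2 * Wb))"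
  have dq: "((\<lambda>s. (\<omega> s j - \<omega> s i)\<^sup>2) has_real_derivative
      2 * ((kur_rhs N \<kappa>0 \<kappa>1 \<kappa>2 thinf (\<theta> t) (\<omega> t) j - kur_rhs N \<kappa>0 \<kappa>1 \<kappa>2 thinf (\<theta> t) (\<omega> t) i) * (\<omega> t j - \<omega> t i)))
      (at t within {0..})" if "t \<ge> 0" "i<N" "j<N" for t i j
    using DERIV_power[OF DERIV_diff[OF d\<omega>[OF that(1) that(3)] d\<omega>[OF that(1) that(2)]], of 2] by simp
  have qb: "\<bar>2 * ((kur_rhs N \<kappa>0 \<kappa>1 \<kappa>2 thinf (\<theta> t) (\<omega> t) j - kur_rhs N \<kappa>0 \<kappa>1 \<kappa>2 thinf (\<theta> t) (\<omega> t) i) * (\<omega> t j - \<omega> t i))\<bar> \<le> M"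
    if "t \<ge> 0" "i<N" "j<N" for t i j
  proof -
    have r: "\<bar>kur_rhs N \<kappa>0 \<kappa>1 \<kappa>2 thinf (\<theta> t) (\<omega> t) j - kur_rhs N \<kappa>0 \<kappa>1 \<kappa>2 thinf (\<theta> t) (\<omega> t) i\<bar> \<le> 2 * R"
      using rb[OF that(1) that(2)] rb[OF that(1) that(3)] by linarith
    have w: "\<bar>\<omega> t j - \<omega> t i\<bar> \<le> 2 * Wb" using wb[OF that(1) that(2)] wb[OF that(1) that(3)] by linarith
    have "\<bar>(kur_rhs N \<kappa>0 \<kappa>1 \<kappa>2 thinf (\<theta> t) (\<omega> t) j - kur_rhs N \<kappa>0 \<kappa>1 \<kappa>2 thinf (\<theta> t) (\<omega> t) i) * (\<omega> t j - \<omega> t i)\<bar> \<le> (2 * R) * (2 * Wb)"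
      unfolding abs_mult by (rule mult_mono[OF r w]) (use Rnn in auto)
    then show ?thesis unfolding M_def by (simp add: abs_mult mult_ac)
  qed
  have part1: "\<forall>i<N. \<forall>j<N. i \<noteq> j \<longrightarrow>
            (\<exists>M. \<forall>t\<ge>0. \<forall>D.
               ((\<lambda>s. (\<omega> s j - \<omega> s i)\<^sup>2) has_real_derivative D) (at t within {0..}) \<longrightarrow> \<bar>D\<bar> \<le> M)"
  proof (intro allI impI exI[of _ M])
    fix i j t D assume ij: "i < N" "j < N" "i \<noteq> j" and t: "0 \<le> t"
      and D: "((\<lambda>s. (\<omega> s j - \<omega> s i)\<^sup>2) has_real_derivative D) (at t within {0..})"
    have "D = 2 * ((kur_rhs N \<kappa>0 \<kappa>1 \<kappa>2 thinf (\<theta> t) (\<omega> t) j - kur_rhs N \<kappa>0 \<kappa>1 \<kappa>2 thinf (\<theta> t) (\<omega> t) i) * (\<omega> t j - \<omega> t i))"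
      using vector_derivative_unique_within[OF nb[OF t]] D dq[OF t ij(1,2)]
      unfolding has_real_derivative_iff_has_vector_derivative by blast
    then show "\<bar>D\<bar> \<le> M" using qb[OF t ij(1,2)] by simp
  qed
  define F where "F t = (\<Sum>i<N. \<Sum>j<N. (\<omega> t j - \<omega> t i)\<^sup>2)" for t
  define F' where "F' t = (\<Sum>i<N. \<Sum>j<N. 2 * ((kur_rhs N \<kappa>0 \<kappa>1 \<kappa>2 thinf (\<theta> t) (\<omega> t) j - kur_rhs N \<kappa>0 \<kappa>1 \<kappa>2 thinf (\<theta> t) (\<omega> t) i) * (\<omega> t j - \<omega> t i)))" for t
  have dF: "(F has_real_derivative F' t) (at t within {0..})" if "t \<in> {0..}" for t
    unfolding F_def[abs_def] F'_def
    by (intro DERIV_sum dq) (use that in auto)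
  have F'b: "norm (F' t) \<le> real N * (real N * M)" if "t \<in> {0..}" for t
    unfolding F'_def real_norm_def
    by (intro sum_abs_bound qb) (use that in auto)
  have lip: "\<bar>F x - F y\<bar> \<le> (real N * (real N * M)) * \<bar>x - y\<bar>" if "x \<in> {0..}" "y \<in> {0..}" for x y
    using field_differentiable_bound[OF convex_real_interval(1) dF F'b that] by simp
  have Mnn: "M \<ge> 0" unfolding M_def using Rnn Wbnn by simp
  define K where "K = real N * (real N * M)"
  have Knn: "K \<ge> 0" unfolding K_def using Mnn by simp
  have part2: "uniformly_continuous_on {0..} F"
    unfolding uniformly_continuous_on_def dist_real_def
  proof (intro allI impI)
    fix e :: real assume e: "e > 0"
    show "\<exists>d>0. \<forall>x\<in>{0..}. \<forall>x'\<in>{0..}. \<bar>x' - x\<bar> < d \<longrightarrow> \<bar>F x' - F x\<bar> < e"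
    proof (intro exI[of _ "e / (K + 1)"] conjI ballI impI)
      show "e / (K + 1) > 0" using e Knn by simp
    next
      fix x x' :: real assume xs: "x \<in> {0..}" "x' \<in> {0..}" and d: "\<bar>x' - x\<bar> < e / (K + 1)"
      have "\<bar>F x' - F x\<bar> \<le> K * \<bar>x' - x\<bar>" using lip[OF xs(2) xs(1)] unfolding K_def .
      also have "\<dots> \<le> K * (e / (K + 1))" using d Knn by (intro mult_left_mono) auto
      also have "\<dots> < e" using e Knn by (simp add: field_simps)
      finally show "\<bar>F x' - F x\<bar> < e" .
    qed
  qed
  show ?thesis using part1 part2 unfolding F_def[abs_def] by blast
qed

end
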